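(* Let $A$ be a square matrix. If some principal submatrix $A[\kappa]$ of $A$ is Hurwitz-stable but is not a $P^-_0$ matrix, then $A$ is $D$-Hopf.
   Context: A square matrix is Hurwitz-stable if all its eigenvalues have negative real part and Hurwitz-unstable if at least one eigenvalue has positive real part. A matrix is a $P^-_0$ matrix if every nonzero $k\times k$ principal minor has sign $(-1)^k$ (for all $k$). Inertia: numbers of eigenvalues with negative, positive, zero real part. $A[\kappa]$ is the principal submatrix indexed by $\kappa$. $A$ is $D$-Hopf if there exist an invertible $k\times k$ principal submatrix $A[\kappa]$ and positive diagonal $D_1,D_2$ with $\operatorname{inertia}(A[\kappa]D_1)\ne\operatorname{inertia}(A[\kappa]D_2)$. *)

theory Defs
  imports "Jordan_Normal_Form.Char_Poly" "Jordan_Normal_Form.DL_Submatrix"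
begin

(* Real square matrices are represented as 'real mat' (Jordan_Normal_Form), indices 0..<n.
   Eigenvalues are taken over the complex numbers. *)

definition cmat :: "real mat \<Rightarrow> complex mat" where
  "cmat B = map_mat complex_of_real B"

definition principal_submatrix :: "real mat \<Rightarrow> nat set \<Rightarrow> real mat" where
  "principal_submatrix A \<kappa> = submatrix A \<kappa> \<kappa>"

definition hurwitz_stable :: "real mat \<Rightarrow> bool" where
  "hurwitz_stable B \<longleftrightarrow> (\<forall>z. eigenvalue (cmat B) z \<longrightarrow> Re z < 0)"

definition eig_count :: "real mat \<Rightarrow> (complex \<Rightarrow> bool) \<Rightarrow> nat" where
  "eig_count B P = (\<Sum>z\<in>{z. poly (char_poly (cmat B)) z = 0 \<and> P z}. order z (char_poly (cmat B)))"

definition inertia :: "real mat \<Rightarrow> nat \<times> nat \<times> nat" where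
  "inertia B = (eig_count B (\<lambda>z. Re z < 0), eig_count B (\<lambda>z. Re z > 0), eig_count B (\<lambda>z. Re z = 0))"

definition P0_minus :: "real mat \<Rightarrow> bool" where
  "P0_minus B \<longleftrightarrow> (\<forall>\<kappa>. \<kappa> \<subseteq> {0..<dim_row B} \<longrightarrow> \<kappa> \<noteq> {} \<longrightarrow>
      det (principal_submatrix B \<kappa>) \<noteq> 0 \<longrightarrow>
      sgn (det (principal_submatrix B \<kappa>)) = (-1) ^ card \<kappa>)"

definition pos_diag :: "nat \<Rightarrow> real mat \<Rightarrow> bool" where
  "pos_diag k D \<longleftrightarrow> D \<in> carrier_mat k k \<and> diagonal_mat D \<and> (\<forall>i<k. D $$ (i,i) > 0)"

definition D_Hopf :: "real mat \<Rightarrow> bool" where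
  "D_Hopf A \<longleftrightarrow> (\<exists>\<kappa> D1 D2. \<kappa> \<subseteq> {0..<dim_row A} \<and> \<kappa> \<noteq> {} \<and>
      det (principal_submatrix A \<kappa>) \<noteq> 0 \<and>
      pos_diag (card \<kappa>) D1 \<and> pos_diag (card \<kappa>) D2 \<and>
      inertia (principal_submatrix A \<kappa> * D1) \<noteq> inertia (principal_submatrix A \<kappa> * D2))"

end

theory Submission
  imports Defs
begin
lemma sylvester_det:
  fixes X :: "'a :: idom mat"
  assumes X: "X \<in> carrier_mat k m" and Y: "Y \<in> carrier_mat m k"
  shows "det (1\<^sub>m k - X * Y) = det (1\<^sub>m m - Y * X)"
proof -
  let ?M = "four_block_mat (1\<^sub>m k) X Y (1\<^sub>m m)"
  let ?L1 = "four_block_mat (1\<^sub>m k) (0\<^sub>m k m) Y (1\<^sub>m m)"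
  let ?R1 = "four_block_mat (1\<^sub>m k) X (0\<^sub>m m k) (1\<^sub>m m - Y * X)"
  let ?L2 = "four_block_mat (1\<^sub>m k) X (0\<^sub>m m k) (1\<^sub>m m)"
  let ?R2 = "four_block_mat (1\<^sub>m k - X * Y) (0\<^sub>m k m) Y (1\<^sub>m m)"
  have YX: "Y * X \<in> carrier_mat m m" using X Y by auto
  have XY: "X * Y \<in> carrier_mat k k" using X Y by auto
  have e1: "?L1 * ?R1 = ?M"
    apply (subst mult_four_block_mat[OF one_carrier_mat zero_carrier_mat Y one_carrier_mat one_carrier_mat X zero_carrier_mat minus_carrier_mat[OF YX]])
    using X Y YX apply (auto)
    done
  have e2: "?L2 * ?R2 = ?M"
    apply (subst mult_four_block_mat[OF one_carrier_mat X zero_carrier_mat one_carrier_mat minus_carrier_mat[OF XY] zero_carrier_mat Y one_carrier_mat])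
    using X Y XY apply (auto)
    done
  have "det ?M = det ?L1 * det ?R1" unfolding e1[symmetric]
    by (rule det_mult[of _ "k+m"], insert X Y, auto)
  also have "det ?L1 = 1"
    by (subst det_four_block_mat_upper_right_zero[of _ k _ m], insert X Y, auto)
  also have "det ?R1 = det (1\<^sub>m m - Y * X)"
    by (subst det_four_block_mat_lower_left_zero[of _ k _ m], insert X Y, auto)
  finally have 1: "det ?M = det (1\<^sub>m m - Y * X)" by simp
  have "det ?M = det ?L2 * det ?R2" unfolding e2[symmetric]
    by (rule det_mult[of _ "k+m"], insert X Y, auto)
  also have "det ?L2 = 1"
    by (subst det_four_block_mat_lower_left_zero[of _ k _ m], insert X Y, auto)
  also have "det ?R2 = det (1\<^sub>m k - X * Y)"
    by (subst det_four_block_mat_upper_right_zero[of _ k _ m], insert X Y, auto)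
  finally have 2: "det ?M = det (1\<^sub>m k - X * Y)" by simp
  show ?thesis using 1 2 by simp
qed


lemma det_mat_cont:
  fixes f :: "nat \<Rightarrow> nat \<Rightarrow> real \<Rightarrow> real"
  assumes "\<And>i j. continuous_on S (f i j)"
  shows "continuous_on S (\<lambda>t. det (mat n n (\<lambda>(i,j). f i j t)))"
proof -
  have eq: "(\<lambda>t. det (mat n n (\<lambda>(i,j). f i j t))) =
    (\<lambda>t. \<Sum> p\<in>{p. p permutes {0..<n}}. signof p * (\<Prod> i=0..<n. f i (p i) t))"
  proof (rule ext)
    fix t
    show "det (mat n n (\<lambda>(i,j). f i j t)) =
      (\<Sum> p\<in>{p. p permutes {0..<n}}. signof p * (\<Prod> i=0..<n. f i (p i) t))"
      apply (subst det_def'[of _ n], simp)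
      apply (rule sum.cong, simp)
      apply (rule arg_cong[where f="\<lambda>x. _ * x"])
      apply (rule prod.cong, simp)
      using permutes_in_image by fastforce
  qed
  show ?thesis unfolding eq by (intro continuous_intros assms)
qed

lemma sum_delta_mult:
  fixes g :: "nat \<Rightarrow> 'a::comm_ring_1"
  assumes "p < k"
  shows "(\<Sum>j\<in>{0..<k}. (if j = p then x else 0) * g j) = x * g p"
proof -
  have "(\<Sum>j\<in>{0..<k}. (if j = p then x else 0) * g j) = (\<Sum>j\<in>{0..<k}. if j = p then x * g j else 0)"
    by (rule sum.cong, auto)
  also have "\<dots> = x * g p" using assms by (subst sum.delta, auto)
  finally show ?thesis .
qed

lemma sum_delta_mult2:
  fixes g :: "nat \<Rightarrow> 'a::comm_ring_1"
  assumes "p < k"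
  shows "(\<Sum>j\<in>{0..<k}. g j * (if p = j then x else 0)) = g p * x"
proof -
  have "(\<Sum>j\<in>{0..<k}. g j * (if p = j then x else 0)) = (\<Sum>j\<in>{0..<k}. if j = p then g j * x else 0)"
    by (rule sum.cong, auto)
  also have "\<dots> = g p * x" using assms by (subst sum.delta, auto)
  finally show ?thesis .
qed

lemma eig_count_zero:
  assumes M: "M \<in> carrier_mat k k" and hs: "hurwitz_stable M"
  shows "eig_count M (\<lambda>z. Re z > 0) = 0"
proof -
  have cM: "cmat M \<in> carrier_mat k k" using M unfolding cmat_def by auto
  have E: "{z. poly (char_poly (cmat M)) z = 0 \<and> Re z > 0} = {}"
    using hs eigenvalue_root_char_poly[OF cM] unfolding hurwitz_stable_def by fastforce
  show ?thesis unfolding eig_count_def E by simp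
qed

lemma det_cmat: "det (cmat N) = complex_of_real (det N)"
  unfolding cmat_def by (rule of_real_hom.hom_det)

lemma eig_count_pos:
  assumes M: "M \<in> carrier_mat k k" and d: "det (1\<^sub>m k - M) = 0"
  shows "eig_count M (\<lambda>z. Re z > 0) > 0"
proof -
  let ?p = "char_poly (cmat M)"
  have cM: "cmat M \<in> carrier_mat k k" using M unfolding cmat_def by auto
  have "char_matrix (cmat M) 1 = cmat (- (1\<^sub>m k - M))"
    by (rule eq_matI, insert M, auto simp: char_matrix_def cmat_def)
  moreover have "1\<^sub>m k - M \<in> carrier_mat k k" using M by auto
  ultimately have "det (char_matrix (cmat M) 1) = 0"
    using det_0_negate[of "1\<^sub>m k - M" k] d M by (auto simp: det_cmat)
  then have "eigenvalue (cmat M) 1" using eigenvalue_det[OF cM] by simp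
  then have r: "poly ?p 1 = 0" using eigenvalue_root_char_poly[OF cM] by simp
  have p0: "?p \<noteq> 0" using degree_monic_char_poly[OF cM] by auto
  have fin: "finite {z. poly ?p z = 0 \<and> Re z > 0}"
    by (rule finite_subset[OF _ poly_roots_finite[OF p0]], auto)
  have mem: "1 \<in> {z. poly ?p z = 0 \<and> Re z > 0}" using r by simp
  have o: "order 1 ?p > 0" using r p0 order_root by blast
  have "order 1 ?p \<le> (\<Sum>z\<in>{z. poly ?p z = 0 \<and> Re z > 0}. order z ?p)"
    by (rule member_le_sum[OF mem], auto simp: fin)
  then show ?thesis using o unfolding eig_count_def by linarith
qed

lemma pick_lt:
  assumes mu: "\<mu> \<subseteq> {0..<k}" and a: "a < card \<mu>"
  shows "pick \<mu> a \<in> \<mu>" "pick \<mu> a < k"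
proof -
  show "pick \<mu> a \<in> \<mu>" using pick_in_set a by blast
  then show "pick \<mu> a < k" using mu by auto
qed

lemma pick_inj:
  assumes "a < card \<mu>" "b < card \<mu>" "pick \<mu> a = pick \<mu> b"
  shows "a = b"
  using assms pick_mono by (metis nat_neq_iff less_irrefl)

lemma pick_surj:
  assumes fin: "finite \<mu>" and j: "j \<in> \<mu>"
  shows "card {a\<in>\<mu>. a < j} < card \<mu>" "pick \<mu> (card {a\<in>\<mu>. a < j}) = j"
proof -
  have "{a\<in>\<mu>. a < j} \<subset> \<mu>" using j by auto
  then show "card {a\<in>\<mu>. a < j} < card \<mu>" using fin psubset_card_mono by blast
  show "pick \<mu> (card {a\<in>\<mu>. a < j}) = j" using pick_card_in_set[OF j] .
qed

theorem mainTheorem5: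
  fixes A :: "real mat" and n :: nat and \<kappa> :: "nat set"
  assumes "A \<in> carrier_mat n n"
    and "\<kappa> \<subseteq> {0..<n}" and "\<kappa> \<noteq> {}"
    and "hurwitz_stable (principal_submatrix A \<kappa>)"
    and "\<not> P0_minus (principal_submatrix A \<kappa>)"
  shows "D_Hopf A"
proof -
  define B where "B = principal_submatrix A \<kappa>"
  define k where "k = card \<kappa>"
  have setk: "{i. i < n \<and> i \<in> \<kappa>} = \<kappa>" using assms(2) by auto
  have dA: "dim_row A = n" "dim_col A = n" using assms(1) by auto
  have Bc: "B \<in> carrier_mat k k"
    unfolding B_def k_def principal_submatrix_def submatrix_def dA setk by auto
  have hs: "hurwitz_stable B" using assms(4) B_def by simp
  obtain \<mu> where mu: "\<mu> \<subseteq> {0..<k}" "\<mu> \<noteq> {}" and dC: "det (principal_submatrix B \<mu>) \<noteq> 0"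
    and sC: "sgn (det (principal_submatrix B \<mu>)) \<noteq> (-1) ^ card \<mu>"
    using assms(5) Bc unfolding P0_minus_def B_def[symmetric] by auto
  define C where "C = principal_submatrix B \<mu>"
  define m where "m = card \<mu>"
  have finmu: "finite \<mu>" using mu(1) finite_subset by blast
  have setm: "{i. i < k \<and> i \<in> \<mu>} = \<mu>" using mu(1) by auto
  have dB: "dim_row B = k" "dim_col B = k" using Bc by auto
  have Cc: "C \<in> carrier_mat m m"
    unfolding C_def m_def principal_submatrix_def submatrix_def dB setm by auto
  have Cidx: "C $$ (a,b) = B $$ (pick \<mu> a, pick \<mu> b)" if "a < m" "b < m" for a b
    using that unfolding C_def m_def principal_submatrix_def submatrix_def dB setm by auto
  have neg: "(-1) ^ m * det C < 0"
  proof -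
    have s: "sgn (det C) = - ((-1) ^ m)" using dC sC unfolding C_def m_def
      by (cases "even (card \<mu>)") (auto simp: sgn_if split: if_splits)
    have "det C = sgn (det C) * \<bar>det C\<bar>" by (simp add: mult_sgn_abs)
    then have "(-1) ^ m * det C = - \<bar>det C\<bar>" using s by (simp add: power_mult_distrib[symmetric])
    then show ?thesis using dC C_def by simp
  qed
  define q where "q = (\<lambda>y::real. det (mat m m (\<lambda>(i,j). (if i = j then 1 else 0) * y - C $$ (i,j))))"
  have q0: "q 0 = (-1) ^ m * det C"
  proof -
    have "mat m m (\<lambda>(i,j). (if i = j then 1 else 0) * 0 - C $$ (i,j)) = (-1) \<cdot>\<^sub>m C"
      by (rule eq_matI, insert Cc, auto)
    then show ?thesis unfolding q_def using Cc by simp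
  qed
  have qc: "continuous_on UNIV q" unfolding q_def
    by (rule det_mat_cont, intro continuous_intros)
  obtain y where y: "y > 0" "q y < 0"
  proof -
    have "isCont q 0" using qc continuous_on_eq_continuous_at[of UNIV q] by auto
    then have "q \<midarrow>0\<rightarrow> q 0" unfolding isCont_def .
    from metric_LIM_D[OF this, of "- q 0"]
    obtain d where d: "d > 0" "\<And>y'. y' \<noteq> 0 \<and> dist y' 0 < d \<longrightarrow> dist (q y') (q 0) < - q 0"
      using neg q0 by auto
    have "dist (q (d/2)) (q 0) < - q 0" using d(1) d(2)[of "d/2"] by (simp add: dist_real_def)
    then have "q (d/2) < 0" unfolding dist_real_def by linarith
    then show ?thesis using that[of "d/2"] d(1) by auto
  qed
  define x where "x = 1 / y"
  have xpos: "x > 0" using y x_def by simp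
  have detxC: "det (1\<^sub>m m - x \<cdot>\<^sub>m C) < 0"
  proof -
    have "1\<^sub>m m - x \<cdot>\<^sub>m C = x \<cdot>\<^sub>m mat m m (\<lambda>(i,j). (if i = j then 1 else 0) * y - C $$ (i,j))"
      by (rule eq_matI, insert Cc y, auto simp: x_def field_simps)
    then have "det (1\<^sub>m m - x \<cdot>\<^sub>m C) = x ^ m * q y" unfolding q_def by simp
    then show ?thesis using y xpos by (simp add: mult_pos_neg)
  qed
  have pk: "pick \<mu> a < k" "pick \<mu> a \<in> \<mu>" if "a < m" for a
    using pick_lt[OF mu(1), of a] that m_def by auto
  define X where "X = mat k m (\<lambda>(i,b). B $$ (i, pick \<mu> b))"
  define Y where "Y = mat m k (\<lambda>(a,j). if j = pick \<mu> a then x else 0)"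
  have Xc: "X \<in> carrier_mat k m" and Yc: "Y \<in> carrier_mat m k" unfolding X_def Y_def by auto
  have YX: "Y * X = x \<cdot>\<^sub>m C"
  proof (rule eq_matI)
    fix a b assume ab: "a < dim_row (x \<cdot>\<^sub>m C)" "b < dim_col (x \<cdot>\<^sub>m C)"
    then have a: "a < m" and b: "b < m" using Cc by auto
    have "(Y * X) $$ (a,b) = (\<Sum>j\<in>{0..<k}. (if j = pick \<mu> a then x else 0) * B $$ (j, pick \<mu> b))"
      using a b unfolding X_def Y_def by (auto simp: scalar_prod_def)
    also have "\<dots> = x * B $$ (pick \<mu> a, pick \<mu> b)" by (rule sum_delta_mult[OF pk(1)[OF a]])
    finally show "(Y * X) $$ (a,b) = (x \<cdot>\<^sub>m C) $$ (a,b)" using a b Cc Cidx by auto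
  qed (insert Cc Xc Yc, auto)
  define D where "D = (\<lambda>t. mat k k (\<lambda>(i,j). if i = j then (if i \<in> \<mu> then t * x else t * (1 - t)) else 0))"
  define dd where "dd = (\<lambda>t j. if j \<in> \<mu> then t * x else t * (1 - t))"
  have BD: "1\<^sub>m k - B * D t = mat k k (\<lambda>(i,j). (if i = j then 1 else 0) - B $$ (i,j) * dd t j)" for t
  proof (rule eq_matI)
    fix i j assume ij: "i < dim_row (mat k k (\<lambda>(i,j). (if i = j then 1 else 0) - B $$ (i,j) * dd t j))"
      "j < dim_col (mat k k (\<lambda>(i,j). (if i = j then 1 else 0) - B $$ (i,j) * dd t j))"
    then have i: "i < k" and j: "j < k" by auto
    have "(B * D t) $$ (i,j) = (\<Sum>l\<in>{0..<k}. B $$ (i,l) * (if j = l then dd t j else 0))"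
      using i j Bc unfolding D_def dd_def by (auto simp: scalar_prod_def intro!: sum.cong)
    also have "\<dots> = B $$ (i,j) * dd t j" by (rule sum_delta_mult2[OF j])
    finally show "(1\<^sub>m k - B * D t) $$ (i,j) = mat k k (\<lambda>(i,j). (if i = j then 1 else 0) - B $$ (i,j) * dd t j) $$ (i,j)"
      using i j Bc unfolding D_def by auto
  qed (insert Bc, auto simp: D_def)
  define h where "h = (\<lambda>t. det (1\<^sub>m k - B * D t))"
  have ddc: "continuous_on UNIV (\<lambda>t. dd t j)" for j
    by (cases "j \<in> \<mu>") (auto simp: dd_def intro!: continuous_intros)
  have hcU: "continuous_on UNIV h" unfolding h_def BD
    by (rule det_mat_cont[of UNIV "\<lambda>i j t. (if i = j then 1 else 0) - B $$ (i,j) * dd t j" k],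
        intro continuous_on_diff continuous_on_mult continuous_on_const ddc)
  have hc: "continuous_on {0..1} h" by (rule continuous_on_subset[OF hcU], auto)
  have h0: "h 0 = 1"
  proof -
    have "mat k k (\<lambda>(i,j). (if i = j then 1 else 0) - B $$ (i,j) * dd 0 j) = 1\<^sub>m k"
      by (rule eq_matI, auto simp: dd_def)
    then show ?thesis unfolding h_def BD by simp
  qed
  have h1: "h 1 < 0"
  proof -
    have "mat k k (\<lambda>(i,j). (if i = j then 1 else 0) - B $$ (i,j) * dd 1 j) = 1\<^sub>m k - X * Y"
    proof (rule eq_matI)
      fix i j assume "i < dim_row (1\<^sub>m k - X * Y)" "j < dim_col (1\<^sub>m k - X * Y)"
      then have i: "i < k" and j: "j < k" using Xc Yc by auto
      have "(X * Y) $$ (i,j) = B $$ (i,j) * dd 1 j"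
      proof (cases "j \<in> \<mu>")
        case True
        define b0 where "b0 = card {a\<in>\<mu>. a < j}"
        have b0: "b0 < m" "pick \<mu> b0 = j" using pick_surj[OF finmu True] b0_def m_def by auto
        have "(X * Y) $$ (i,j) = (\<Sum>b\<in>{0..<m}. B $$ (i, pick \<mu> b) * (if j = pick \<mu> b then x else 0))"
          using i j unfolding X_def Y_def by (auto simp: scalar_prod_def)
        also have "\<dots> = (\<Sum>b\<in>{0..<m}. B $$ (i, pick \<mu> b) * (if b0 = b then x else 0))"
        proof (rule sum.cong[OF refl])
          fix b assume "b \<in> {0..<m}"
          then have bm: "b < card \<mu>" using m_def by simp
          have b0m: "b0 < card \<mu>" using b0(1) m_def by simp
          have "j = pick \<mu> b \<longleftrightarrow> b0 = b"
          proof
            assume "j = pick \<mu> b"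
            then have "pick \<mu> b = pick \<mu> b0" using b0(2) by simp
            from pick_inj[OF bm b0m this] show "b0 = b" by simp
          next
            assume "b0 = b"
            then show "j = pick \<mu> b" using b0(2) by simp
          qed
          then show "B $$ (i, pick \<mu> b) * (if j = pick \<mu> b then x else 0) = B $$ (i, pick \<mu> b) * (if b0 = b then x else 0)"
            by simp
        qed
        also have "\<dots> = B $$ (i, pick \<mu> b0) * x" by (rule sum_delta_mult2[OF b0(1)])
        finally show ?thesis using b0 True by (simp add: dd_def)
      next
        case False
        have "(X * Y) $$ (i,j) = (\<Sum>b\<in>{0..<m}. B $$ (i, pick \<mu> b) * (if j = pick \<mu> b then x else 0))"
          using i j unfolding X_def Y_def by (auto simp: scalar_prod_def)
        also have "\<dots> = 0" using False pk by (intro sum.neutral) auto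
        finally show ?thesis using False by (simp add: dd_def)
      qed
      then show "mat k k (\<lambda>(i,j). (if i = j then 1 else 0) - B $$ (i,j) * dd 1 j) $$ (i,j) = (1\<^sub>m k - X * Y) $$ (i,j)"
        using i j Xc Yc by auto
    qed (insert Xc Yc, auto)
    then have "h 1 = det (1\<^sub>m k - X * Y)" unfolding h_def BD by simp
    also have "\<dots> = det (1\<^sub>m m - Y * X)" by (rule sylvester_det[OF Xc Yc])
    also have "\<dots> = det (1\<^sub>m m - x \<cdot>\<^sub>m C)" unfolding YX ..
    finally show ?thesis using detxC by simp
  qed
  obtain t where t: "0 \<le> t" "t \<le> 1" "- h t = 0"
    using IVT'[of "\<lambda>t. - h t" 0 0 1] h0 h1 hc continuous_on_minus by fastforce
  have t01: "0 < t" "t < 1" using t h0 h1 by (auto simp: le_less)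
  have Dc: "D t \<in> carrier_mat k k" unfolding D_def by auto
  have pd2: "pos_diag k (D t)" unfolding pos_diag_def diagonal_mat_def
    using Dc t01 xpos by (auto simp: D_def)
  have pd1: "pos_diag k (1\<^sub>m k)" unfolding pos_diag_def diagonal_mat_def by auto
  have BDc: "B * D t \<in> carrier_mat k k" using Bc Dc by auto
  have e2: "eig_count (B * D t) (\<lambda>z. Re z > 0) > 0"
    by (rule eig_count_pos[OF BDc], insert t, simp add: h_def)
  have e1: "eig_count (B * 1\<^sub>m k) (\<lambda>z. Re z > 0) = 0"
    using eig_count_zero[OF Bc hs] Bc by simp
  have in_ne: "inertia (B * 1\<^sub>m k) \<noteq> inertia (B * D t)"
    using e1 e2 unfolding inertia_def by auto
  have cB: "cmat B \<in> carrier_mat k k" using Bc unfolding cmat_def by auto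
  have detB: "det B \<noteq> 0"
  proof
    assume "det B = 0"
    moreover have "char_matrix (cmat B) 0 = cmat B"
      by (rule eq_matI, insert Bc, auto simp: char_matrix_def cmat_def)
    ultimately have "eigenvalue (cmat B) 0" using eigenvalue_det[OF cB] by (simp add: det_cmat)
    then show False using hs unfolding hurwitz_stable_def by fastforce
  qed
  show ?thesis unfolding D_Hopf_def
    apply (rule exI[of _ \<kappa>], rule exI[of _ "1\<^sub>m k"], rule exI[of _ "D t"])
    using assms(2,3) detB pd1 pd2 in_ne dA unfolding B_def k_def by auto
qed
end
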